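(* Let $k\ge 10$, and consider the procedure $\mathcal{A}$ (described in the context) started on an input $(\mathcal{L},\ell,\tau)$ with $\mathrm{rank}(\mathcal{L})=n\ge k$, $\tau\ge0$ and $1\le\ell\le n-k+1$. Then the total number of invocations of $\mathcal{A}$ made during the whole recursion is at most $4^{\tau}\cdot p(n)$ for a fixed polynomial $p$ (independent of $\mathcal{L},\ell,\tau,k$).
   Context: Notation: for a lattice $\mathcal{L}$, $\mathcal{L}^*$ is its dual lattice, and for a lattice $\mathcal{M}$, $\mathcal{M}^\perp$ is the orthogonal complement of $\mathrm{span}(\mathcal{M})$; for a rank-$r$ sublattice $\mathcal{M}\subseteq \mathcal{L}^*$, $\mathcal{L}\cap\mathcal{M}^\perp$ has rank $\mathrm{rank}(\mathcal{L})-r$. Sublattices returned by $\mathcal{A}(\mathcal{L},\ell,\tau)$ have rank $\ell$. Procedure $\mathcal{A}(\mathcal{L},\ell,\tau)$, with $n:=\mathrm{rank}(\mathcal{L})$ and $n>\ell\ge1$, $\tau\ge 0$ integers: 1. Duality step: if $\max\{1,(n-k)/5\}<\ell<n/2$ or $\ell\ge n-\max\{1,(n-k)/10\}$, output $\mathcal{L}\cap\mathcal{A}(\mathcal{L}^*,n-\ell,\tau)^\perp$. 2. Base cases: (a) if $n=k$ and $\ell=1$, call an HSVP oracle on $\mathcal{L}$ and output the lattice generated by the returned vector; (b) if $\tau=0$, output the lattice generated by the first $\ell$ vectors of an LLL-reduced basis of $\mathcal{L}$. 3. Recursive step: otherwise set $\ell^*=\lceil (n-k)/20\rceil$, $b=1$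 if $\ell<n/2$ and $b=0$ otherwise, compute $\mathcal{M}:=\mathcal{A}(\mathcal{L}^*,\ell^*,\tau-b)$ and output $\mathcal{A}(\mathcal{L}\cap\mathcal{M}^\perp,\ell,\tau)$. The sequence of parameters $(n,\ell,\tau)$ of the invocations depends only on the initial parameters. *)

theory Defs
  imports "HOL-Computational_Algebra.Polynomial" Complex_Main
begin

text \<open>calls k n l t c : the invocation A(L, l, t) with rank(L) = n (and parameter k)
  terminates, and the total number of invocations of A made (including this one
  and all recursive ones) equals c.  Only the parameters (n, l, t) matter.\<close>

definition dual_cond :: "nat \<Rightarrow> nat \<Rightarrow> nat \<Rightarrow> bool" where
  "dual_cond k n l \<longleftrightarrow>
     (max 1 ((real n - real k) / 5) < real l \<and> real l < real n / 2) \<or>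
     real l \<ge> real n - max 1 ((real n - real k) / 10)"

inductive calls :: "nat \<Rightarrow> nat \<Rightarrow> nat \<Rightarrow> nat \<Rightarrow> nat \<Rightarrow> bool" where
  duality: "dual_cond k n l \<Longrightarrow> calls k n (n - l) t c \<Longrightarrow> calls k n l t (Suc c)"
| base_hsvp: "\<not> dual_cond k n l \<Longrightarrow> n = k \<Longrightarrow> l = 1 \<Longrightarrow> calls k n l t 1"
| base_lll: "\<not> dual_cond k n l \<Longrightarrow> \<not> (n = k \<and> l = 1) \<Longrightarrow> t = 0 \<Longrightarrow> calls k n l t 1"
| recur: "\<not> dual_cond k n l \<Longrightarrow> \<not> (n = k \<and> l = 1) \<Longrightarrow> t \<noteq> 0 \<Longrightarrow>
     ls = nat \<lceil>(real n - real k) / 20\<rceil> \<Longrightarrow>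
     b = (if real l < real n / 2 then 1 else 0) \<Longrightarrow>
     calls k n ls (t - b) c1 \<Longrightarrow> calls k (n - ls) l t c2 \<Longrightarrow>
     calls k n l t (1 + c1 + c2)"

end

theory Submission
  imports Defs
begin


definition lsf :: "nat \<Rightarrow> nat \<Rightarrow> nat" where "lsf k n = nat \<lceil>(real n - real k) / 20\<rceil>"
definition G :: "nat \<Rightarrow> nat \<Rightarrow> real" where "G t d = 4 ^ t * (real d + 2) ^ 22"
definition Inv :: "nat \<Rightarrow> nat \<Rightarrow> nat \<Rightarrow> bool" where
  "Inv k n l \<longleftrightarrow> 10 \<le> k \<and> k \<le> n \<and> 1 \<le> l \<and> l < n \<and> (l \<le> n - k + 1 \<or> n - l \<le> n - k + 1)"

lemma lsf_bounds:
  assumes "k \<le> n" "1 \<le> n - k"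
  shows "1 \<le> lsf k n" "lsf k n \<le> n - k" "real (n - k) / 20 \<le> real (lsf k n)"
    "real (lsf k n) < real (n - k) / 20 + 1"
proof -
  have e: "real n - real k = real (n - k)" using assms by (simp add: of_nat_diff)
  define x where "x = real (n - k) / 20"
  have x0: "x > 0" using assms by (simp add: x_def)
  have c1: "x \<le> of_int \<lceil>x\<rceil>" by (rule le_of_int_ceiling)
  have c2: "of_int \<lceil>x\<rceil> < x + 1" using ceiling_correct[of x] by linarith
  have cpos: "\<lceil>x\<rceil> \<ge> 1" using x0 by (simp add: zero_less_ceiling)
  have l: "real (lsf k n) = of_int \<lceil>x\<rceil>" unfolding lsf_def e x_def[symmetric] using cpos by simp
  show "1 \<le> lsf k n" unfolding lsf_def e x_def[symmetric] using cpos by linarith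
  show "real (n - k) / 20 \<le> real (lsf k n)" using l c1 x_def by simp
  show "real (lsf k n) < real (n - k) / 20 + 1" using l c2 x_def by simp
  have "x \<le> real (n - k)" using x_def by simp
  then have "\<lceil>x\<rceil> \<le> int (n - k)" by (simp add: ceiling_le_iff)
  then have "nat \<lceil>x\<rceil> \<le> nat (int (n - k))" by (rule nat_mono)
  then show "lsf k n \<le> n - k" unfolding lsf_def e x_def[symmetric] by simp
qed

lemma shr: "(y::real) = d - x \<Longrightarrow> 1 \<le> x \<Longrightarrow> d/20 \<le> x \<Longrightarrow> 22 * (y + 2) \<le> 21 * (d + 2)"
  by (cases "d \<le> 20") (simp_all add: algebra_simps; linarith)+

lemma shrink:
  assumes "k \<le> n" "1 \<le> n - k"
  shows "real (n - k - lsf k n) + 2 \<le> 21/22 * (real (n - k) + 2)"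
proof -
  note b = lsf_bounds[OF assms]
  have "real (n - k - lsf k n) = real (n - k) - real (lsf k n)" using b(2) by (simp add: of_nat_diff)
  moreover have "real (lsf k n) \<ge> 1" using b(1) by simp
  ultimately have "22 * (real (n - k - lsf k n) + 2) \<le> 21 * (real (n - k) + 2)" using b(3)
    by (rule shr)
  then show ?thesis by (simp add: field_simps)
qed

lemma Gineq:
  assumes "k \<le> n" "1 \<le> n - k" "t \<ge> 1"
  shows "G (t - 1) (n - k) + 2 * G t (n - k - lsf k n) + 3 \<le> G t (n - k)"
proof -
  define X where "X = (real (n - k) + 2) ^ 22"
  define Y where "Y = (real (n - k - lsf k n) + 2) ^ 22"
  have "Y \<le> (21/22 * (real (n - k) + 2)) ^ 22" unfolding Y_def
    by (rule power_mono[OF shrink[OF assms(1,2)]]) simp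
  also have "\<dots> = (21/22)^22 * X" unfolding X_def by (simp only: power_mult_distrib)
  also have "\<dots> \<le> (9/25) * X" by (rule mult_right_mono) (simp add: power_divide, simp add: X_def)
  finally have Y: "Y \<le> (9/25) * X" .
  have X: "X \<ge> 2 ^ 22" unfolding X_def by (rule power_mono) auto
  define W where "W = 4 ^ (t - 1) * X"
  have "(1::real) \<le> 4 ^ (t - 1)" by simp
  then have W: "W \<ge> 2^22"
  proof -
    have "(1::real) * 2^22 \<le> 4 ^ (t - 1) * X" using mult_mono[of "1::real" "4^(t-1)" "2^22" X] X \<open>1 \<le> 4 ^ (t - 1)\<close> by simp
    then show ?thesis by (simp add: W_def)
  qed
  have t4: "(4::real) ^ t = 4 * 4 ^ (t - 1)" using assms(3) by (cases t) auto
  have "G (t - 1) (n - k) = W" unfolding G_def W_def X_def by simp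
  moreover have "G t (n - k) = 4 * W" unfolding G_def W_def X_def t4 by simp
  moreover have "G t (n - k - lsf k n) \<le> 4 * 4 ^ (t - 1) * ((9/25) * X)"
    unfolding G_def W_def Y_def[symmetric] t4 using Y by (intro mult_left_mono) auto
  moreover have "4 * 4 ^ (t - 1) * ((9/25) * X) = (36/25) * W" unfolding W_def by simp
  moreover have "W \<ge> 4194304" using W by simp
  ultimately show ?thesis by linarith
qed


lemma dsw: fixes N K L :: real assumes "10 \<le> K" "K \<le> N" "1 \<le> L" "L < N"
  "(max 1 ((N-K)/5) < L \<and> L < N/2) \<or> L \<ge> N - max 1 ((N-K)/10)"
  shows "\<not> ((max 1 ((N-K)/5) < N-L \<and> N-L < N/2) \<or> N-L \<ge> N - max 1 ((N-K)/10))"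
proof -
  define a where "a = max 1 ((N-K)/5)"
  define b where "b = max 1 ((N-K)/10)"
  have ba: "b \<le> a" unfolding a_def b_def using assms(2) by (simp add: max_def)
  have b2: "2*b < N" unfolding b_def using assms(1,2) by (simp add: max_def)
  have h: "(a < L \<and> L < N/2) \<or> L \<ge> N - b" using assms(5) a_def b_def by simp
  have 1: "a < L \<Longrightarrow> L < N/2 \<Longrightarrow> \<not> (N-L < N/2)" by linarith
  have 2: "L \<ge> N - b \<Longrightarrow> \<not> (a < N - L)" using ba by linarith
  have 3: "a < L \<Longrightarrow> \<not>(N-L \<ge> N-b)" using ba by linarith
  have 4: "L \<ge> N-b \<Longrightarrow> \<not>(N-L \<ge> N-b)" using b2 by linarith
  show ?thesis unfolding a_def[symmetric] b_def[symmetric] using h 1 2 3 4 by blast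
qed

lemma lss: fixes N K x D :: real and m :: nat
  assumes "10 \<le> K" "D = N - K" "1 \<le> D" "x = real m" "1 \<le> x" "D/20 \<le> x" "x < D/20+1"
  shows "\<not> ((max 1 ((N-K)/5) < x \<and> x < N/2) \<or> x \<ge> N - max 1 ((N-K)/10))"
proof -
  define a where "a = max 1 ((N-K)/5)"
  define b where "b = max 1 ((N-K)/10)"
  have "x \<le> a"
  proof (cases "D \<le> 7")
    case True then have "x < 2" using assms by linarith
    then have "m \<le> 1" using assms(4) by linarith
    then have "x \<le> 1" using assms(4) by simp
    then show ?thesis unfolding a_def by simp
  next
    case False then have "x \<le> D/5" using assms by linarith
    then have "x \<le> (N - K) / 5" using assms(2) by simp
    then show ?thesis unfolding a_def by (simp add: le_max_iff_disj)
  qed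
  moreover have "b \<le> 1 + D/10" unfolding b_def using assms(2,3) by (simp add: max_def)
  then have "x < N - b" using assms by linarith
  ultimately show ?thesis unfolding a_def[symmetric] b_def[symmetric] by linarith
qed

lemma dual_swap:
  assumes "10 \<le> k" "k \<le> n" "1 \<le> l" "l < n" "dual_cond k n l"
  shows "\<not> dual_cond k n (n - l)"
proof -
  have "real (n - l) = real n - real l" using assms by (simp add: of_nat_diff)
  then show ?thesis using dsw[of "real k" "real n" "real l"] assms unfolding dual_cond_def by simp
qed

lemma ls_small:
  assumes "10 \<le> k" "k \<le> n" "1 \<le> n - k"
  shows "\<not> dual_cond k n (lsf k n)" "real (lsf k n) < real n / 2"
proof -
  note b = lsf_bounds[OF assms(2,3)]
  have e: "real (n - k) = real n - real k" using assms by (simp add: of_nat_diff)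
  show "real (lsf k n) < real n / 2" using b(4) e assms(1) by linarith
  have f1: "real k \<ge> 10" "real (lsf k n) \<ge> 1" using assms b by auto
  have "real (1::nat) \<le> real (n - k)" using assms(3) by (rule of_nat_mono)
  then have f2: "real (n - k) \<ge> 1" by simp
  note f = f1 f2
  show "\<not> dual_cond k n (lsf k n)" unfolding dual_cond_def
    using lss[of "real k" "real (n-k)" "real n" "real (lsf k n)" "lsf k n", OF f1(1) e f2 refl f1(2) b(3) b(4)] by simp
qed

lemma d0:
  assumes "Inv k k l" "\<not> dual_cond k k l" shows "l = 1"
proof -
  have "l = 1 \<or> l = k - 1" "1 \<le> l" "l < k" using assms(1) unfolding Inv_def by auto
  moreover have "l \<noteq> k - 1"
  proof
    assume "l = k - 1"
    then have "real l = real k - 1" using \<open>l < k\<close> by (simp add: of_nat_diff)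
    then have "dual_cond k k l" unfolding dual_cond_def by simp
    then show False using assms(2) by simp
  qed
  ultimately show ?thesis by blast
qed

lemma init_inv: "10 \<le> k \<Longrightarrow> k \<le> n \<Longrightarrow> 1 \<le> l \<Longrightarrow> l \<le> n - k + 1 \<Longrightarrow> Inv k n l"
  unfolding Inv_def by auto

lemma inv_dual: "Inv k n l \<Longrightarrow> Inv k n (n - l)"
  unfolding Inv_def by auto

lemma inv_ls: "Inv k n l \<Longrightarrow> 1 \<le> n - k \<Longrightarrow> Inv k n (lsf k n)"
  using lsf_bounds[of k n] unfolding Inv_def by auto

lemma inv_rec:
  assumes "Inv k n l" "1 \<le> n - k" "\<not> dual_cond k n l"
  shows "Inv k (n - lsf k n) l"
proof -
  note b = lsf_bounds[OF _ assms(2)]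
  have kn: "k \<le> n" "10 \<le> k" "1 \<le> l" "l < n" using assms(1) Inv_def by auto
  note b = b[OF kn(1)]
  have e: "real (n - k) = real n - real k" using kn by (simp add: of_nat_diff)
  have el: "real (n - l) = real n - real l" using kn by (simp add: of_nat_diff)
  define a where "a = max 1 ((real n - real k) / 5)"
  define bb where "bb = max 1 ((real n - real k) / 10)"
  have nd: "real (n - l) > bb" "a \<ge> real l \<or> real l \<ge> real n / 2"
    using assms(3) el unfolding dual_cond_def a_def[symmetric] bb_def[symmetric] by auto
  have bb1: "bb \<ge> 1" "bb \<ge> real (n - k) / 10" unfolding bb_def e by auto
  have gap: "n - l \<ge> lsf k n + 1"
  proof (cases "lsf k n = 1")
    case True
    have "real (n - l) > 1" using nd(1) bb1 by simp
    then show ?thesis using True by simp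
  next
    case False
    then have "lsf k n \<ge> 2" using b(1) by simp
    hence "real (lsf k n) \<ge> 2" by simp
    hence "real (n - l) > real (lsf k n)" using nd(1) bb1 b(4) by linarith
    then show ?thesis by simp
  qed
  show ?thesis unfolding Inv_def
  proof (intro conjI)
    show "10 \<le> k" "1 \<le> l" by (fact kn)+
    show "k \<le> n - lsf k n" using b(2) kn by simp
    show "l < n - lsf k n" using gap by simp
    have "l \<le> n - k + 1 \<or> n - l \<le> n - k + 1" using assms(1) Inv_def by auto
    then show "l \<le> n - lsf k n - k + 1 \<or> n - lsf k n - l \<le> n - lsf k n - k + 1"
    proof
      assume h: "l \<le> n - k + 1"
      show ?thesis
      proof (cases "real l \<ge> real n / 2")
        case True
        then have "n - l \<le> l" by linarith
        then show ?thesis using h gap b(2) kn by arith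
      next
        case False
        then have l5: "real l \<le> a" using nd(2) by auto
        have eq: "real (n - k - lsf k n) = real (n - k) - real (lsf k n)" using b(2) by (simp add: of_nat_diff)
        have "a = 1 \<or> a = real (n - k) / 5" unfolding a_def e by (simp add: max_def)
        then have "real l \<le> real (n - k - lsf k n) + 1"
        proof
          assume "a = 1" then show ?thesis using l5 by simp
        next
          assume "a = real (n - k) / 5" then show ?thesis using l5 eq b(4) by linarith
        qed
        then have "l \<le> n - k - lsf k n + 1" by linarith
        then show ?thesis by arith
      qed
    next
      assume "n - l \<le> n - k + 1"
      then show ?thesis using gap b(2) kn by arith
    qed
  qed
qed



lemma G_ge: "G t d \<ge> 2"
proof -
  have "(2::real) \<le> (real d + 2) ^ 1" by simp
  also have "\<dots> \<le> (real d + 2) ^ 22" by (rule power_increasing) auto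
  also have "\<dots> \<le> 4 ^ t * (real d + 2) ^ 22" by simp
  finally show ?thesis unfolding G_def .
qed

lemma G_nonneg: "G t d \<ge> 0" using G_ge[of t d] by linarith

lemma main:
  assumes k10: "10 \<le> k"
  shows "Inv k n l \<Longrightarrow> \<exists>c. calls k n l t c \<and> real c \<le> (if dual_cond k n l then G t (n - k) else G t (n - k) - 1)"
proof (induction t arbitrary: n l rule: less_induct)
  case (less t)
  note IHt = less.IH
  show ?case using less.prems
  proof (induction n arbitrary: l rule: less_induct)
    case (less n)
    note IHn = less.IH
    have kn: "k \<le> n" using less.prems Inv_def by auto
    have anyb: "\<exists>c. calls k m l' t c \<and> real c \<le> G t (m - k)" if h1: "Inv k m l'" and h2: "m < n" for m l'
    proof -
      obtain c where "calls k m l' t c" "real c \<le> (if dual_cond k m l' then G t (m - k) else G t (m - k) - 1)"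
        using IHn[OF h2 h1] by blast
      then show ?thesis by (intro exI[of _ c]) (auto split: if_splits)
    qed
    have small: "\<exists>c. calls k n l' t c \<and> real c \<le> (if t = 0 \<or> n = k then 1 else G (t-1) (n-k) + G t (n - k - lsf k n) + 1)"
      if inv: "Inv k n l'" and nd: "\<not> dual_cond k n l'" and sm: "real l' < real n / 2" for l'
    proof (cases "n = k")
      case True
      then have "l' = 1" using d0[of k l'] inv nd by simp
      then have "calls k n l' t 1" using True nd by (intro calls.base_hsvp) auto
      then show ?thesis using True by auto
    next
      case nk: False
      then have d1: "1 \<le> n - k" using kn by simp
      have nh: "\<not> (n = k \<and> l' = 1)" using nk by simp
      show ?thesis
      proof (cases "t = 0")
        case True
        then have "calls k n l' t 1" using nh nd by (intro calls.base_lll) auto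
        then show ?thesis using True by auto
      next
        case t0: False
        obtain c1 where c1: "calls k n (lsf k n) (t-1) c1" "real c1 \<le> G (t-1) (n-k) - 1"
          using IHt[of "t-1" n "lsf k n"] t0 inv_ls[OF inv d1] ls_small(1)[OF k10 kn d1] by auto
        have ln: "lsf k n \<le> n - k" "1 \<le> lsf k n" using lsf_bounds[OF kn d1] by auto
        have lt: "n - lsf k n < n" using ln kn by simp
        obtain c2 where c2: "calls k (n - lsf k n) l' t c2" "real c2 \<le> G t (n - lsf k n - k)"
          using anyb[OF inv_rec[OF inv d1 nd] lt] by blast
        have r: "calls k n (lsf k n) (t - (if real l' < real n / 2 then 1 else 0)) c1" using c1 sm by simp
        have "calls k n l' t (1 + c1 + c2)"
          by (rule calls.recur[OF nd nh t0 refl refl r[unfolded lsf_def] c2(1)[unfolded lsf_def]])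
        moreover have "n - lsf k n - k = n - k - lsf k n" by simp
        ultimately show ?thesis using c1 c2 t0 nk by (intro exI[of _ "1 + c1 + c2"]) auto
      qed
    qed
    have nondual: "\<exists>c. calls k n l' t c \<and> real c \<le> G t (n - k) - 1"
      if inv: "Inv k n l'" and nd: "\<not> dual_cond k n l'" for l'
    proof (cases "real l' < real n / 2")
      case True
      obtain c where c: "calls k n l' t c" "real c \<le> (if t = 0 \<or> n = k then 1 else G (t-1) (n-k) + G t (n - k - lsf k n) + 1)"
        using small[OF inv nd True] by blast
      have "real c \<le> G t (n - k) - 1"
      proof (cases "t = 0 \<or> n = k")
        case True then show ?thesis using c G_ge[of t "n-k"] by simp
      next
        case False
        then have "1 \<le> n - k" "1 \<le> t" using kn by auto
        then show ?thesis using c False Gineq[OF kn, of t] G_nonneg[of t "n - k - lsf k n"] by simp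
      qed
      then show ?thesis using c by blast
    next
      case large: False
      have nk: "n \<noteq> k"
      proof
        assume "n = k"
        then have "l' = 1" using d0[of k l'] inv nd by simp
        then show False using large kn k10 by simp
      qed
      then have d1: "1 \<le> n - k" using kn by simp
      have nh: "\<not> (n = k \<and> l' = 1)" using nk by simp
      show ?thesis
      proof (cases "t = 0")
        case True
        then have "calls k n l' t 1" using nh nd by (intro calls.base_lll) auto
        then show ?thesis using G_ge[of t "n-k"] by auto
      next
        case t0: False
        obtain c1 where c1: "calls k n (lsf k n) t c1"
          "real c1 \<le> (if t = 0 \<or> n = k then 1 else G (t-1) (n-k) + G t (n - k - lsf k n) + 1)"
          using small[OF inv_ls[OF inv d1] ls_small(1)[OF k10 kn d1] ls_small(2)[OF k10 kn d1]] by blast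
        have ln: "lsf k n \<le> n - k" "1 \<le> lsf k n" using lsf_bounds[OF kn d1] by auto
        have lt: "n - lsf k n < n" using ln kn by simp
        obtain c2 where c2: "calls k (n - lsf k n) l' t c2" "real c2 \<le> G t (n - lsf k n - k)"
          using anyb[OF inv_rec[OF inv d1 nd] lt] by blast
        have r: "calls k n (lsf k n) (t - (if real l' < real n / 2 then 1 else 0)) c1" using c1 large by simp
        have "calls k n l' t (1 + c1 + c2)"
          by (rule calls.recur[OF nd nh t0 refl refl r[unfolded lsf_def] c2(1)[unfolded lsf_def]])
        moreover have "n - lsf k n - k = n - k - lsf k n" by simp
        moreover have "1 \<le> t" using t0 by simp
        ultimately show ?thesis using c1 c2 t0 nk Gineq[OF kn d1, of t] by (intro exI[of _ "1 + c1 + c2"]) auto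
      qed
    qed
    show ?case
    proof (cases "dual_cond k n l")
      case True
      have inv: "Inv k n l" by fact
      have "1 \<le> l" "l < n" using inv Inv_def by auto
      then have nd: "\<not> dual_cond k n (n - l)" using dual_swap[OF k10 kn _ _ True] by simp
      obtain c where c: "calls k n (n - l) t c" "real c \<le> G t (n - k) - 1"
        using nondual[OF inv_dual[OF inv] nd] by blast
      have "calls k n l t (Suc c)" by (rule calls.duality[OF True c(1)])
      then show ?thesis using True c(2) by (intro exI[of _ "Suc c"]) auto
    next
      case False
      then show ?thesis using nondual[OF less.prems False] by auto
    qed
  qed
qed

theorem mainTheorem3:
  "\<exists>p :: real poly. \<forall>k n l t. k \<ge> 10 \<longrightarrow> n \<ge> k \<longrightarrow> 1 \<le> l \<longrightarrow> l \<le> n - k + 1 \<longrightarrow>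
     (\<exists>c. calls k n l t c \<and> real c \<le> 4 ^ t * poly p (real n))"
proof (rule exI[of _ "[:2, 1:] ^ 22"], intro allI impI)
  fix k n l t :: nat
  assume a: "k \<ge> 10" "n \<ge> k" "1 \<le> l" "l \<le> n - k + 1"
  obtain c where c: "calls k n l t c" "real c \<le> (if dual_cond k n l then G t (n - k) else G t (n - k) - 1)"
    using main[OF a(1) init_inv[OF a(1,2,3,4)]] by blast
  have "real c \<le> G t (n - k)" using c(2) by (auto split: if_splits)
  also have "\<dots> \<le> 4 ^ t * (real n + 2) ^ 22"
  proof -
    have "(real (n - k) + 2) ^ 22 \<le> (real n + 2) ^ 22" by (rule power_mono) auto
    then show ?thesis unfolding G_def by (rule mult_left_mono) simp
  qed
  also have "\<dots> = 4 ^ t * poly ([:2, 1:] ^ 22) (real n)" by (simp add: poly_power add.commute)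
  finally show "\<exists>c. calls k n l t c \<and> real c \<le> 4 ^ t * poly ([:2, 1:] ^ 22) (real n)" using c(1) by blast
qed

end
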